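(* Let $A$ be an order complete Banach lattice algebra, let $\Lambda$ be an index set and let $\{p_\lambda\}_{\lambda\in\Lambda}\subseteq BP_l(A)\cap BP_r(A)$ satisfy $p_\alpha p_\beta=\delta_{\alpha\beta}p_\alpha$ for all $\alpha,\beta\in\Lambda$ ($\delta_{\alpha\beta}$ the Kronecker delta). Let $\Gamma\subseteq\Lambda\times\Lambda$ be arbitrary. Then for every $x\in A_+$ the supremum $P_\Gamma(x)=\bigvee_{(\alpha,\beta)\in\Gamma}p_\alpha x p_\beta$ exists in $A$, and the map $P_\Gamma\colon A_+\to A_+$ extends to a unique band projection $P_\Gamma\colon A\to A$.
   Context: A Banach lattice algebra is a real Banach lattice $A$ equipped with an associative bilinear product making $(A,\cdot)$ a Banach algebra ($\|xy\|\le\|x\|\|y\|$) such that $xy\ge 0$ whenever $x,y\ge0$. It is order complete if every nonempty subset bounded above has a supremum. For $a\in A$, $L_a,R_a\colon A\to A$ denote the multiplication operators $L_a(x)=ax$, $R_a(x)=xa$. A band projection on a Banach lattice $X$ is an operator $P\colon X\to X$ with $P^2=P$ and $0\le P\le I_X$ (equivalently, the projection onto a projection band along its disjoint complement). $BP_l(A)=\{a\in A_+: L_a \text{ is a band projection}\}$ and $BP_r(A)=\{a\in A_+: R_a\text{ is a band projection}\}$. *)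

theory Defs
  imports "HOL-Analysis.Analysis"
begin

text \<open>Banach lattice algebras are modelled on a type of class
  real_normed_algebra (associative, bilinear product, submultiplicative norm),
  banach (complete), ordered_real_vector (ordered vector space) and lattice
  (vector lattice).\<close>

definition labs :: "'a::{lattice, uminus} \<Rightarrow> 'a" where
  "labs x = sup x (- x)"

definition banach_lattice_algebra ::
  "'a::{real_normed_algebra, banach, ordered_real_vector, lattice} itself \<Rightarrow> bool" where
  "banach_lattice_algebra (_ :: 'a itself) \<longleftrightarrow>
     (\<forall>x y :: 'a. labs x \<le> labs y \<longrightarrow> norm x \<le> norm y) \<and>
     (\<forall>x y :: 'a. 0 \<le> x \<longrightarrow> 0 \<le> y \<longrightarrow> 0 \<le> x * y)"

definition is_lub_in :: "'a::order set \<Rightarrow> 'a \<Rightarrow> bool" where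
  "is_lub_in S s \<longleftrightarrow> (\<forall>y\<in>S. y \<le> s) \<and> (\<forall>u. (\<forall>y\<in>S. y \<le> u) \<longrightarrow> s \<le> u)"

definition is_lub_pos :: "'a::{order, zero} set \<Rightarrow> 'a \<Rightarrow> bool" where
  "is_lub_pos S s \<longleftrightarrow> 0 \<le> s \<and> (\<forall>y\<in>S. y \<le> s) \<and>
     (\<forall>u. 0 \<le> u \<longrightarrow> (\<forall>y\<in>S. y \<le> u) \<longrightarrow> s \<le> u)"

definition order_complete :: "'a::order itself \<Rightarrow> bool" where
  "order_complete (_ :: 'a itself) \<longleftrightarrow>
     (\<forall>S :: 'a set. S \<noteq> {} \<and> bdd_above S \<longrightarrow> (\<exists>s. is_lub_in S s))"

definition band_projection :: "('a::{real_vector, order} \<Rightarrow> 'a) \<Rightarrow> bool" where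
  "band_projection P \<longleftrightarrow> linear P \<and> P \<circ> P = P \<and>
     (\<forall>x. 0 \<le> x \<longrightarrow> 0 \<le> P x \<and> P x \<le> x)"

definition BP_l :: "'a::{real_algebra, order} set" where
  "BP_l = {a. 0 \<le> a \<and> band_projection (\<lambda>x. a * x)}"

definition BP_r :: "'a::{real_algebra, order} set" where
  "BP_r = {a. 0 \<le> a \<and> band_projection (\<lambda>x. x * a)}"

end

theory Submission
  imports Defs
begin

lemma lub_pos_unique: "is_lub_pos S s \<Longrightarrow> is_lub_pos S t \<Longrightarrow> s = t"
  unfolding is_lub_pos_def by (meson antisym)

lemma lub_pos_le: "is_lub_pos S s \<Longrightarrow> y0 \<in> S \<Longrightarrow> 0 \<le> y0 \<Longrightarrow> (\<forall>y\<in>S. y \<le> u) \<Longrightarrow> s \<le> u"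
  unfolding is_lub_pos_def by (meson order_trans)

lemma grp_aux: "(c::'a::ab_group_add) + b = a + d \<Longrightarrow> x = c - d \<Longrightarrow> x = a - b"
proof -
  assume e: "c + b = a + d" and x: "x = c - d"
  have "c - d = (c + b) - (d + b)" by simp
  also have "\<dots> = a - b" unfolding e by simp
  finally show ?thesis using x by simp
qed

locale bpfam =
  fixes p :: "'i \<Rightarrow> 'a::{real_normed_algebra, banach, ordered_real_vector, lattice}"
    and \<Gamma> :: "('i \<times> 'i) set"
  assumes oc: "order_complete TYPE('a)"
    and pBP: "\<And>l. p l \<in> BP_l \<inter> BP_r"
    and orth: "\<And>\<alpha> \<beta>. p \<alpha> * p \<beta> = (if \<alpha> = \<beta> then p \<alpha> else 0)"
begin

definition Q :: "'i \<Rightarrow> 'i \<Rightarrow> 'a \<Rightarrow> 'a" where "Q a b x = p a * x * p b"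
definition S :: "'a \<Rightarrow> 'a set" where "S x = {p \<alpha> * x * p \<beta> | \<alpha> \<beta>. (\<alpha>, \<beta>) \<in> \<Gamma>}"

lemma S_alt: "S x = {Q a b x | a b. (a,b) \<in> \<Gamma>}" by (simp add: S_def Q_def)

lemma Lpos: "0 \<le> x \<Longrightarrow> 0 \<le> p a * x \<and> p a * x \<le> x"
  using pBP[of a] by (auto simp: BP_l_def band_projection_def)
lemma Rpos: "0 \<le> x \<Longrightarrow> 0 \<le> x * p a \<and> x * p a \<le> x"
  using pBP[of a] by (auto simp: BP_r_def band_projection_def)

lemma Q_pos: "0 \<le> x \<Longrightarrow> 0 \<le> Q a b x"
  unfolding Q_def using Lpos Rpos by blast
lemma Q_le: "0 \<le> x \<Longrightarrow> Q a b x \<le> x"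
  unfolding Q_def using Lpos Rpos by (meson order_trans)
lemma Q_add: "Q a b (x+y) = Q a b x + Q a b y" by (simp add: Q_def algebra_simps)
lemma Q_diff: "Q a b (x-y) = Q a b x - Q a b y" by (simp add: Q_def algebra_simps)
lemma Q_scale: "Q a b (c *\<^sub>R x) = c *\<^sub>R Q a b x" by (simp add: Q_def)
lemma Q_zero: "Q a b 0 = 0" by (simp add: Q_def)
lemma Q_mono: "x \<le> y \<Longrightarrow> Q a b x \<le> Q a b y"
proof -
  assume "x \<le> y"
  hence "0 \<le> y - x" by simp
  hence "0 \<le> Q a b (y - x)" by (rule Q_pos)
  thus ?thesis by (simp add: Q_diff)
qed
lemma Q_Q: "Q a b (Q c d x) = (if a = c \<and> b = d then Q a b x else 0)"
proof -
  have "Q a b (Q c d x) = (p a * p c) * x * (p d * p b)" by (simp add: Q_def mult.assoc)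
  thus ?thesis using orth by (auto simp: Q_def)
qed

lemma pair:
  assumes "0 \<le> u" "Q a b z \<le> u" "Q c d z \<le> u" "(a,b) \<noteq> (c,d)"
  shows "Q a b z + Q c d z \<le> u"
proof -
  have 1: "Q a b z \<le> Q a b u" using Q_mono[OF assms(2), of a b] by (simp add: Q_Q)
  have 2: "Q c d z \<le> Q c d u" using Q_mono[OF assms(3), of c d] by (simp add: Q_Q)
  have 3: "Q c d u = Q c d (u - Q a b u)" using assms(4) by (auto simp add: Q_diff Q_Q)
  have "0 \<le> u - Q a b u" using Q_le[OF assms(1)] by simp
  hence "Q c d (u - Q a b u) \<le> u - Q a b u" by (rule Q_le)
  hence "Q c d u \<le> u - Q a b u" unfolding 3 .
  hence "Q a b u + Q c d u \<le> u" by (simp add: le_diff_eq add.commute)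
  thus ?thesis using 1 2 by (meson add_mono order_trans)
qed

lemma S_exists: "0 \<le> x \<Longrightarrow> \<exists>s. is_lub_pos (S x) s"
proof (cases "\<Gamma> = {}")
  case True
  assume "0 \<le> x"
  have "S x = {}" unfolding S_def using True by simp
  thus ?thesis by (auto simp: is_lub_pos_def)
next
  case False
  assume x: "0 \<le> x"
  then obtain a b where ab: "(a,b) \<in> \<Gamma>" using False by auto
  have ne: "S x \<noteq> {}" using ab by (auto simp: S_alt)
  have bd: "bdd_above (S x)" by (rule bdd_aboveI[of _ x]) (auto simp: S_alt intro: Q_le[OF x])
  obtain s where s: "is_lub_in (S x) s" using oc ne bd unfolding order_complete_def by blast
  have "Q a b x \<in> S x" using ab by (auto simp: S_alt)
  hence "0 \<le> s" using s Q_pos[OF x, of a b] unfolding is_lub_in_def by (meson order_trans)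
  hence "is_lub_pos (S x) s" using s unfolding is_lub_in_def is_lub_pos_def by blast
  thus ?thesis by blast
qed

definition Pp where "Pp x = (SOME s. is_lub_pos (S x) s)"

lemma Pp: "0 \<le> x \<Longrightarrow> is_lub_pos (S x) (Pp x)"
  unfolding Pp_def using S_exists by (rule someI_ex)
lemma Pp_eq: "0 \<le> x \<Longrightarrow> is_lub_pos (S x) t \<Longrightarrow> Pp x = t"
  using Pp lub_pos_unique by blast
lemma Pp_nonneg: "0 \<le> x \<Longrightarrow> 0 \<le> Pp x" using Pp unfolding is_lub_pos_def by blast
lemma Pp_ge: "0 \<le> x \<Longrightarrow> (a,b) \<in> \<Gamma> \<Longrightarrow> Q a b x \<le> Pp x"
  using Pp unfolding is_lub_pos_def S_alt by blast
lemma Pp_least0: "0 \<le> x \<Longrightarrow> 0 \<le> u \<Longrightarrow> (\<And>c d. (c,d)\<in>\<Gamma> \<Longrightarrow> Q c d x \<le> u) \<Longrightarrow> Pp x \<le> u"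
  using Pp unfolding is_lub_pos_def S_alt by blast
lemma Pp_least: "0 \<le> x \<Longrightarrow> (a,b)\<in>\<Gamma> \<Longrightarrow> (\<And>c d. (c,d)\<in>\<Gamma> \<Longrightarrow> Q c d x \<le> u) \<Longrightarrow> Pp x \<le> u"
  by (rule Pp_least0) (auto intro: order_trans[OF Q_pos])
lemma Pp_le_x: "0 \<le> x \<Longrightarrow> Pp x \<le> x"
  by (rule Pp_least0) (auto intro: Q_le)

lemma Pp0: "Pp 0 = 0"
  by (rule Pp_eq) (auto simp: is_lub_pos_def S_alt Q_zero)

lemma S_empty: "\<Gamma> = {} \<Longrightarrow> S x = {}" unfolding S_def by simp

lemma Pp_empty: assumes "\<Gamma> = {}" "0 \<le> x" shows "Pp x = 0"
proof -
  have "S x = {}" by (rule S_empty[OF assms(1)])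
  hence "is_lub_pos (S x) 0" by (simp add: is_lub_pos_def)
  thus ?thesis using Pp_eq[OF assms(2)] by blast
qed

lemma Pp_add: assumes x: "0\<le>x" and y: "0\<le>y" shows "Pp (x+y) = Pp x + Pp y"
proof (cases "\<Gamma> = {}")
  case True thus ?thesis using Pp_empty[OF True] x y by simp
next
  case False
  then obtain a0 b0 where ab0: "(a0,b0) \<in> \<Gamma>" by auto
  have xy: "0 \<le> x + y" using x y by simp
  have le: "Pp (x+y) \<le> Pp x + Pp y"
    by (rule Pp_least0[OF xy]) (auto simp: Q_add intro!: add_mono Pp_ge x y add_nonneg_nonneg Pp_nonneg)
  have key: "Q a b x + Q c d y \<le> Pp (x+y)" if ab: "(a,b)\<in>\<Gamma>" and cd: "(c,d)\<in>\<Gamma>" for a b c d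
  proof (cases "(a,b) = (c,d)")
    case True
    thus ?thesis using Pp_ge[OF xy ab] by (simp add: Q_add)
  next
    case False
    have 1: "Q a b x \<le> Q a b (x+y)" by (rule Q_mono) (simp add: y)
    have 2: "Q c d y \<le> Q c d (x+y)" by (rule Q_mono) (simp add: x)
    have "Q a b (x+y) + Q c d (x+y) \<le> Pp (x+y)"
      by (rule pair[OF Pp_nonneg[OF xy] Pp_ge[OF xy ab] Pp_ge[OF xy cd] False])
    thus ?thesis using 1 2 by (meson add_mono order_trans)
  qed
  have k2: "Q c d y \<le> Pp (x+y) - Pp x" if cd: "(c,d)\<in>\<Gamma>" for c d
  proof -
    have "Pp x \<le> Pp (x+y) - Q c d y"
      by (rule Pp_least[OF x ab0]) (use key[OF _ cd] in \<open>simp add: le_diff_eq\<close>)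
    thus ?thesis by (simp add: le_diff_eq add.commute)
  qed
  have "Pp y \<le> Pp (x+y) - Pp x" by (rule Pp_least[OF y ab0]) (rule k2)
  hence "Pp x + Pp y \<le> Pp (x+y)" by (simp add: le_diff_eq add.commute)
  thus ?thesis using le by simp
qed

lemma Pp_scale: assumes x: "0 \<le> x" and c: "0 \<le> c" shows "Pp (c *\<^sub>R x) = c *\<^sub>R Pp x"
proof (cases "c = 0")
  case True thus ?thesis by (simp add: Pp0)
next
  case False
  hence c0: "c > 0" using c by simp
  have cx: "0 \<le> c *\<^sub>R x" using x c by (simp add: scaleR_nonneg_nonneg)
  show ?thesis
  proof (rule Pp_eq[OF cx])
    show "is_lub_pos (S (c *\<^sub>R x)) (c *\<^sub>R Pp x)"
      unfolding is_lub_pos_def S_alt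
    proof (intro conjI allI impI ballI)
      show "0 \<le> c *\<^sub>R Pp x" using c Pp_nonneg[OF x] by (simp add: scaleR_nonneg_nonneg)
    next
      fix y assume "y \<in> {Q a b (c *\<^sub>R x) |a b. (a, b) \<in> \<Gamma>}"
      then obtain a b where ab: "(a,b)\<in>\<Gamma>" and y: "y = Q a b (c *\<^sub>R x)" by auto
      show "y \<le> c *\<^sub>R Pp x" unfolding y Q_scale
        by (rule scaleR_left_mono[OF Pp_ge[OF x ab] c])
    next
      fix u :: 'a assume u: "0 \<le> u" and b: "\<forall>y\<in>{Q a b (c *\<^sub>R x) |a b. (a, b) \<in> \<Gamma>}. y \<le> u"
      have "Pp x \<le> (1/c) *\<^sub>R u"
      proof (rule Pp_least0[OF x])
        show "0 \<le> (1/c) *\<^sub>R u" using u c by (simp add: scaleR_nonneg_nonneg)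
      next
        fix a b assume ab: "(a,b)\<in>\<Gamma>"
        have "c *\<^sub>R Q a b x \<le> u" using b ab by (auto simp: Q_scale)
        hence "(1/c) *\<^sub>R (c *\<^sub>R Q a b x) \<le> (1/c) *\<^sub>R u"
          by (rule scaleR_left_mono) (use c in simp)
        thus "Q a b x \<le> (1/c) *\<^sub>R u" using c0 by simp
      qed
      hence "c *\<^sub>R Pp x \<le> c *\<^sub>R ((1/c) *\<^sub>R u)" by (rule scaleR_left_mono[OF _ c])
      thus "c *\<^sub>R Pp x \<le> u" using c0 by simp
    qed
  qed
qed

lemma Pp_idem: assumes x: "0 \<le> x" shows "Pp (Pp x) = Pp x"
proof -
  have e: "Q a b (Pp x) = Q a b x" if ab: "(a,b)\<in>\<Gamma>" for a b
  proof (rule antisym)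
    show "Q a b (Pp x) \<le> Q a b x" by (rule Q_mono[OF Pp_le_x[OF x]])
    show "Q a b x \<le> Q a b (Pp x)" using Q_mono[OF Pp_ge[OF x ab], of a b] by (simp add: Q_Q)
  qed
  have "S (Pp x) = S x" unfolding S_alt using e by force
  thus ?thesis using Pp_eq[OF Pp_nonneg[OF x]] Pp[OF x] by simp
qed

definition PP where "PP x = Pp (sup x 0) - Pp (sup x 0 - x)"

lemma PP_diff: assumes a: "0\<le>a" and b: "0\<le>b" shows "PP (a - b) = Pp a - Pp b"
proof -
  define c where "c = sup (a-b) 0"
  define d where "d = c - (a - b)"
  have c0: "0 \<le> c" unfolding c_def by simp
  have d0: "0 \<le> d" unfolding d_def c_def by simp
  have "c + b = a + d" unfolding d_def by (simp add: algebra_simps)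
  hence "Pp (c + b) = Pp (a + d)" by simp
  hence "Pp c + Pp b = Pp a + Pp d" using Pp_add a b c0 d0 by simp
  moreover have "PP (a - b) = Pp c - Pp d" unfolding PP_def c_def d_def by simp
  ultimately show ?thesis by (rule grp_aux)
qed

lemma PP_pos: "0 \<le> x \<Longrightarrow> PP x = Pp x"
  using PP_diff[of x 0] by (simp add: Pp0)

lemma dec1: "0 \<le> sup x (0::'a)" by simp
lemma dec2: "0 \<le> sup x 0 - (x::'a)" by simp
lemma dec: "x = sup x 0 - (sup x 0 - (x::'a))" by simp

lemma PP_add: "PP (x+y) = PP x + PP y"
proof -
  have "x + y = (sup x 0 + sup y 0) - ((sup x 0 - x) + (sup y 0 - y))" by (simp add: algebra_simps)
  hence "PP (x+y) = Pp (sup x 0 + sup y 0) - Pp ((sup x 0 - x) + (sup y 0 - y))"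
    using PP_diff add_nonneg_nonneg dec1 dec2 by metis
  also have "\<dots> = (Pp (sup x 0) + Pp (sup y 0)) - (Pp (sup x 0 - x) + Pp (sup y 0 - y))"
    by (simp only: Pp_add[OF dec1 dec1] Pp_add[OF dec2 dec2])
  also have "\<dots> = PP x + PP y" unfolding PP_def by (simp add: algebra_simps)
  finally show ?thesis .
qed

lemma PP_scale: "PP (c *\<^sub>R x) = c *\<^sub>R PP x"
proof (cases "0 \<le> c")
  case True
  have "c *\<^sub>R x = c *\<^sub>R sup x 0 - c *\<^sub>R (sup x 0 - x)" by (simp add: algebra_simps)
  hence "PP (c *\<^sub>R x) = Pp (c *\<^sub>R sup x 0) - Pp (c *\<^sub>R (sup x 0 - x))"
    using PP_diff True dec1 dec2 scaleR_nonneg_nonneg by metis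
  also have "\<dots> = c *\<^sub>R PP x" unfolding PP_def
    unfolding Pp_scale[OF dec1 True] Pp_scale[OF dec2 True] by (simp add: scaleR_diff_right)
  finally show ?thesis .
next
  case False
  hence nc: "0 \<le> -c" by simp
  have "c *\<^sub>R x = (-c) *\<^sub>R (sup x 0 - x) - (-c) *\<^sub>R sup x 0" by (simp add: algebra_simps)
  hence "PP (c *\<^sub>R x) = Pp ((-c) *\<^sub>R (sup x 0 - x)) - Pp ((-c) *\<^sub>R sup x 0)"
    using PP_diff nc dec1 dec2 scaleR_nonneg_nonneg by metis
  also have "\<dots> = c *\<^sub>R PP x" unfolding PP_def
    unfolding Pp_scale[OF dec1 nc] Pp_scale[OF dec2 nc] by (simp add: scaleR_diff_right)
  finally show ?thesis .
qed

lemma PP_linear: "linear PP"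
  by (rule linearI) (simp_all add: PP_add PP_scale)

lemma PP_band: "band_projection PP"
  unfolding band_projection_def
proof (intro conjI allI impI)
  show "linear PP" by (rule PP_linear)
  show "PP \<circ> PP = PP"
  proof
    fix x
    have "(PP \<circ> PP) x = PP (Pp (sup x 0) - Pp (sup x 0 - x))" by (simp add: PP_def)
    also have "\<dots> = Pp (Pp (sup x 0)) - Pp (Pp (sup x 0 - x))"
      by (rule PP_diff) (simp_all add: Pp_nonneg dec1 dec2)
    also have "\<dots> = PP x" by (simp add: Pp_idem PP_def dec1 dec2)
    finally show "(PP \<circ> PP) x = PP x" .
  qed
next
  fix x :: 'a assume "0 \<le> x"
  thus "0 \<le> PP x" "PP x \<le> x" by (simp_all add: PP_pos Pp_nonneg Pp_le_x)
qed

end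

theorem mainTheorem1:
  fixes p :: "'i \<Rightarrow> 'a::{real_normed_algebra, banach, ordered_real_vector, lattice}"
    and \<Gamma> :: "('i \<times> 'i) set"
  assumes "banach_lattice_algebra TYPE('a)"
    and "order_complete TYPE('a)"
    and "\<And>l. p l \<in> BP_l \<inter> BP_r"
    and "\<And>\<alpha> \<beta>. p \<alpha> * p \<beta> = (if \<alpha> = \<beta> then p \<alpha> else 0)"
  shows "(\<forall>x::'a. 0 \<le> x \<longrightarrow>
            (\<exists>s. is_lub_pos {p \<alpha> * x * p \<beta> | \<alpha> \<beta>. (\<alpha>, \<beta>) \<in> \<Gamma>} s))
       \<and> (\<exists>!P :: 'a \<Rightarrow> 'a. band_projection P \<and>
            (\<forall>x. 0 \<le> x \<longrightarrow> is_lub_pos {p \<alpha> * x * p \<beta> | \<alpha> \<beta>. (\<alpha>, \<beta>) \<in> \<Gamma>} (P x)))"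
proof -
  interpret bpfam p \<Gamma> using assms by unfold_locales auto
  have part1: "\<forall>x::'a. 0 \<le> x \<longrightarrow> (\<exists>s. is_lub_pos (S x) s)" using S_exists by blast
  have ex: "band_projection PP \<and> (\<forall>x. 0 \<le> x \<longrightarrow> is_lub_pos (S x) (PP x))"
    using PP_band Pp PP_pos by simp
  have uniq: "P = PP" if P: "band_projection P" "\<forall>x. 0 \<le> x \<longrightarrow> is_lub_pos (S x) (P x)" for P
  proof
    fix x
    have pos: "P y = PP y" if "0 \<le> y" for y
      using Pp_eq[OF that P(2)[rule_format, OF that]] PP_pos[OF that] by simp
    have lin: "linear P" using P(1) by (simp add: band_projection_def)
    have "P x = P (sup x 0) - P (sup x 0 - x)"
      using linear_diff[OF lin, of "sup x 0" "sup x 0 - x"] by simp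
    also have "\<dots> = PP (sup x 0) - PP (sup x 0 - x)" using pos dec1 dec2 by simp
    also have "\<dots> = PP x" using linear_diff[OF PP_linear, of "sup x 0" "sup x 0 - x"] by simp
    finally show "P x = PP x" .
  qed
  have "(\<forall>x::'a. 0 \<le> x \<longrightarrow> (\<exists>s. is_lub_pos (S x) s))
       \<and> (\<exists>!P :: 'a \<Rightarrow> 'a. band_projection P \<and> (\<forall>x. 0 \<le> x \<longrightarrow> is_lub_pos (S x) (P x)))"
  proof (intro conjI)
    show "\<forall>x::'a. 0 \<le> x \<longrightarrow> (\<exists>s. is_lub_pos (S x) s)" by (rule part1)
    show "\<exists>!P :: 'a \<Rightarrow> 'a. band_projection P \<and> (\<forall>x. 0 \<le> x \<longrightarrow> is_lub_pos (S x) (P x))"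
      by (rule ex1I[of _ PP]) (use ex uniq in blast)+
  qed
  thus ?thesis unfolding S_def .
qed

end
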